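(* Let $n\ge 5$ and $\Delta,\Delta'\in\mathcal{P}_n$. If there exists $i\in\mathbb{Z}_n$ such that $lab_\Delta((i+1,i))=lab_{\Delta'}((i+1,i))=\oplus$ and $lab_\Delta((i-1,i))\neq lab_{\Delta'}((i-1,i))$, and moreover $lab_\Delta((j,j-1))=lab_{\Delta'}((j,j-1))$ for all $j\in\mathbb{Z}_n$, then $f^{(\Delta)}_{8,n}\neq f^{(\Delta')}_{8,n}$.
   Context: Cells are indexed by $\mathbb{Z}_n=\{0,\dots,n-1\}$, indices modulo $n$. Rule $8$ has local rule $r_8(x_1,x_2,x_3)=\neg x_1\wedge x_2\wedge x_3$ and global function $f_{8,n}(x)_i=r_8(x_{i-1},x_i,x_{i+1})$. An update schedule is an ordered partition $\Delta=(\Delta_1,\dots,\Delta_k)$ of $\mathbb{Z}_n$ into nonempty blocks; $\mathcal{P}_n$ is the set of them. For a block $B$ let $f^{(B)}(x)_i=f_{8,n}(x)_i$ if $i\in B$ and $x_i$ otherwise; $f^{(\Delta)}_{8,n}=f^{(\Delta_k)}\circ\cdots\circ f^{(\Delta_1)}$. (The paper states the conclusion as inequality of the transition digraphs with arcs $(x,f^{(\Delta)}_{8,n}(x))$, equivalent to inequality of the maps.) For $u,v\in\mathbb{Z}_n$ with $u\in\Delta_a$, $v\in\Delta_b$, $lab_\Delta((u,v))=\oplus$ if $b\le a$ and $\ominus$ if $a<b$. *)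

theory Defs
  imports Main
begin

(* Configurations on Z_n: x :: nat => bool, only cells 0..<n matter. *)

definition r8 :: "bool \<Rightarrow> bool \<Rightarrow> bool \<Rightarrow> bool" where
  "r8 x1 x2 x3 = ((\<not> x1) \<and> x2 \<and> x3)"

definition f8 :: "nat \<Rightarrow> (nat \<Rightarrow> bool) \<Rightarrow> nat \<Rightarrow> bool" where
  "f8 n x i = r8 (x ((i + n - 1) mod n)) (x (i mod n)) (x ((i + 1) mod n))"

definition block_upd :: "nat \<Rightarrow> nat set \<Rightarrow> (nat \<Rightarrow> bool) \<Rightarrow> (nat \<Rightarrow> bool)" where
  "block_upd n B x = (\<lambda>i. if i \<in> B then f8 n x i else x i)"

(* f^(Delta) = f^(Delta_k) o ... o f^(Delta_1); Delta given as list [Delta_1,...,Delta_k] *)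
definition sched_map :: "nat \<Rightarrow> nat set list \<Rightarrow> (nat \<Rightarrow> bool) \<Rightarrow> (nat \<Rightarrow> bool)" where
  "sched_map n D x = fold (block_upd n) D x"

definition ordered_partition :: "nat \<Rightarrow> nat set list \<Rightarrow> bool" where
  "ordered_partition n D \<longleftrightarrow>
     (\<forall>a < length D. D ! a \<noteq> {}) \<and>
     (\<forall>a < length D. \<forall>b < length D. a \<noteq> b \<longrightarrow> D ! a \<inter> D ! b = {}) \<and>
     \<Union> (set D) = {0..<n}"

definition blk :: "nat set list \<Rightarrow> nat \<Rightarrow> nat" where
  "blk D u = (THE a. a < length D \<and> u \<in> D ! a)"

(* lab_Delta((u,v)): True = oplus, False = ominus; oplus iff blk v <= blk u *)
definition lab :: "nat set list \<Rightarrow> nat \<Rightarrow> nat \<Rightarrow> bool" where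
  "lab D u v \<longleftrightarrow> blk D v \<le> blk D u"

definition maps_differ :: "nat \<Rightarrow> nat set list \<Rightarrow> nat set list \<Rightarrow> bool" where
  "maps_differ n D D' \<longleftrightarrow>
     (\<exists>x. (\<forall>i. n \<le> i \<longrightarrow> \<not> x i) \<and> (\<exists>i < n. sched_map n D x i \<noteq> sched_map n D' x i))"

end

theory Submission
  imports Defs
begin

lemma blk_eq:
  assumes "ordered_partition n D" "a < length D" "c \<in> D ! a"
  shows "blk D c = a"
proof -
  have "\<And>b. b < length D \<and> c \<in> D ! b \<Longrightarrow> b = a"
    using assms unfolding ordered_partition_def by blast
  then show ?thesis unfolding blk_def using assms(2,3) by (metis (mono_tags, lifting) the_equality)
qed

lemma blk_ex:
  assumes "ordered_partition n D" "c < n"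
  shows "\<exists>a < length D. c \<in> D ! a"
proof -
  have "c \<in> \<Union> (set D)" using assms unfolding ordered_partition_def by auto
  then show ?thesis by (auto simp: in_set_conv_nth)
qed

lemma bu_in: "c \<in> B \<Longrightarrow> block_upd n B s c = f8 n s c"
  by (simp add: block_upd_def)
lemma bu_out: "c \<notin> B \<Longrightarrow> block_upd n B s c = s c"
  by (simp add: block_upd_def)

lemma state_val:
  assumes P: "ordered_partition n D" and a: "a < length D" "c \<in> D ! a"
  shows "fold (block_upd n) (take k D) x c =
           (if k \<le> a then x c else f8 n (fold (block_upd n) (take a D) x) c)"
proof (induction k)
  case 0
  then show ?case by simp
next
  case (Suc k)
  show ?case
  proof (cases "k < length D")
    case False
    then have "take (Suc k) D = take k D" by simp
    then show ?thesis using Suc False a by simp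
  next
    case True
    have tk: "take (Suc k) D = take k D @ [D ! k]" using True by (simp add: take_Suc_conv_app_nth)
    have dis: "c \<in> D ! k \<Longrightarrow> k = a" using P a True unfolding ordered_partition_def by blast
    show ?thesis
    proof (cases "c \<in> D ! k")
      case True
      then have "fold (block_upd n) (take (Suc k) D) x c = f8 n (fold (block_upd n) (take a D) x) c"
        using dis tk True by (simp add: bu_in)
      then show ?thesis using dis True by simp
    next
      case False
      then have "k \<noteq> a" using a by auto
      then show ?thesis using False tk Suc by (auto simp: bu_out)
    qed
  qed
qed

lemma sched_val:
  assumes P: "ordered_partition n D" and a: "a < length D" "c \<in> D ! a"
  shows "sched_map n D x c = f8 n (fold (block_upd n) (take a D) x) c"
  using state_val[OF P a, of "length D" x] a unfolding sched_map_def by simp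

lemma key:
  assumes P: "ordered_partition n E"
    and m: "ei < length E" "i \<in> E ! ei" "ep < length E" "p \<in> E ! ep"
           "eq < length E" "q \<in> E ! eq" "er < length E" "r \<in> E ! er"
           "es < length E" "s \<in> E ! es"
    and ix: "(i+n-1) mod n = p" "i mod n = i" "(i+1) mod n = s"
            "(p+n-1) mod n = q" "p mod n = p" "(p+1) mod n = i"
            "(q+n-1) mod n = r" "q mod n = q" "(q+1) mod n = p" "r mod n = r"
    and xv: "\<not> x r" "x q" "x p" "x i" "x s"
    and le: "ei \<le> es" "ep \<le> ei"
  shows "sched_map n E x i = (ep < ei)"
proof -
  let ?st = "\<lambda>k. fold (block_upd n) (take k E) x"
  have SV: "\<And>a c k. a < length E \<Longrightarrow> c \<in> E ! a \<Longrightarrow>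
      ?st k c = (if k \<le> a then x c else f8 n (?st a) c)"
    using state_val[OF P] by blast
  have r_all: "\<not> ?st k r" for k
    using SV[OF m(7,8), of k] SV[OF m(7,8), of er] xv ix by (auto simp: f8_def r8_def)
  have q_all: "?st k q" if "k \<le> ep" for k
  proof (cases "k \<le> eq")
    case True then show ?thesis using SV[OF m(5,6), of k] xv by simp
  next
    case False
    then have "?st k q = f8 n (?st eq) q" using SV[OF m(5,6), of k] by simp
    moreover have "?st eq q" using SV[OF m(5,6), of eq] xv by simp
    moreover have "?st eq p" using SV[OF m(3,4), of eq] xv False that by simp
    ultimately show ?thesis using r_all ix by (simp add: f8_def r8_def)
  qed
  have fin: "sched_map n E x i = f8 n (?st ei) i" by (rule sched_val[OF P m(1,2)])
  have si: "?st ei i" using SV[OF m(1,2), of ei] xv by simp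
  have ss: "?st ei s" using SV[OF m(9,10), of ei] xv le by simp
  show ?thesis
  proof (cases "ep = ei")
    case True
    then have "?st ei p" using SV[OF m(3,4), of ei] xv by simp
    then show ?thesis using fin si ss ix True by (simp add: f8_def r8_def)
  next
    case False
    then have lt: "ep < ei" using le by simp
    then have "?st ei p = f8 n (?st ep) p" using SV[OF m(3,4), of ei] by simp
    moreover have "?st ep p" using SV[OF m(3,4), of ep] xv by simp
    moreover have "?st ep i" using SV[OF m(1,2), of ep] xv lt by simp
    moreover have "?st ep q" using q_all by simp
    ultimately have "\<not> ?st ei p" using ix by (simp add: f8_def r8_def)
    then show ?thesis using fin si ss ix lt by (simp add: f8_def r8_def)
  qed
qed

lemma pred_mod: "(n::nat) > 0 \<Longrightarrow> j < n \<Longrightarrow> (j + n - 1) mod n = (if j = 0 then n - 1 else j - 1)"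
proof -
  assume "n > 0" "j < n"
  show ?thesis
  proof (cases "j = 0")
    case True
    have "n - 1 < n" using \<open>n>0\<close> by arith
    then show ?thesis using True by simp
  next
    case False
    then have "j + n - 1 = (j - 1) + n" by simp
    moreover have "j - 1 < n" using \<open>j<n\<close> by arith
    ultimately have "(j + n - 1) mod n = j - 1" by (metis mod_add_self2 mod_less)
    then show ?thesis using False by simp
  qed
qed

lemma succ_mod: "(j::nat) < n \<Longrightarrow> (j + 1) mod n = (if j = n - 1 then 0 else j + 1)"
proof -
  assume a: "j < n"
  show ?thesis
  proof (cases "j = n - 1")
    case True then have "j + 1 = n" using a by arith
    then show ?thesis using True by simp
  next
    case False then have "j + 1 < n" using a by simp
    then show ?thesis using False by simp
  qed
qed

theorem mainTheorem16:
  fixes n :: nat and D D' :: "nat set list"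
  assumes "n \<ge> 5"
    and "ordered_partition n D" and "ordered_partition n D'"
    and "\<exists>i < n. lab D ((i + 1) mod n) i \<and> lab D' ((i + 1) mod n) i
                 \<and> lab D ((i + n - 1) mod n) i \<noteq> lab D' ((i + n - 1) mod n) i"
    and "\<forall>j < n. lab D j ((j + n - 1) mod n) = lab D' j ((j + n - 1) mod n)"
  shows "maps_differ n D D'"
proof -
  obtain i where i: "i < n" "lab D ((i + 1) mod n) i" "lab D' ((i + 1) mod n) i"
      "lab D ((i + n - 1) mod n) i \<noteq> lab D' ((i + n - 1) mod n) i"
    using assms(4) by blast
  define p where "p = (i + n - 1) mod n"
  define q where "q = (p + n - 1) mod n"
  define r where "r = (q + n - 1) mod n"
  define s where "s = (i + 1) mod n"
  have n0: "n > 0" using assms(1) by simp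
  have lt: "p < n" "q < n" "r < n" "s < n"
    using n0 by (auto simp: p_def q_def r_def s_def)
  have pe0: "p = (if i = 0 then n - 1 else i - 1)" "q = (if p = 0 then n - 1 else p - 1)"
    using pred_mod[OF n0] i(1) lt by (auto simp: p_def q_def)
  have ps: "(p+1) mod n = i" "(q+1) mod n = p"
  proof -
    show "(p+1) mod n = i" using succ_mod[OF lt(1)] pe0(1) i(1) n0 by (auto split: if_splits)
    show "(q+1) mod n = p" using succ_mod[OF lt(2)] pe0(2) lt(1) n0 by (auto split: if_splits)
  qed
  have ix: "(i+n-1) mod n = p" "i mod n = i" "(i+1) mod n = s"
            "(p+n-1) mod n = q" "p mod n = p" "(p+1) mod n = i"
            "(q+n-1) mod n = r" "q mod n = q" "(q+1) mod n = p" "r mod n = r"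
    using i(1) lt ps by (auto simp: p_def q_def r_def s_def)
  have pe: "p = (if i = 0 then n - 1 else i - 1)" "q = (if p = 0 then n - 1 else p - 1)"
     "r = (if q = 0 then n - 1 else q - 1)" "s = (if i = n - 1 then 0 else i + 1)"
    using pe0 pred_mod[OF n0, of q] succ_mod[OF i(1)] lt unfolding r_def s_def by auto
  have dist: "r \<noteq> q" "r \<noteq> p" "r \<noteq> i" "r \<noteq> s"
    using i(1) assms(1) pe lt by (auto split: if_splits)
  define x where "x j = (j \<in> {q, p, i, s})" for j
  have xv: "\<not> x r" "x q" "x p" "x i" "x s" using dist by (auto simp: x_def)
  have xz: "\<forall>j. n \<le> j \<longrightarrow> \<not> x j" using lt i(1) by (auto simp: x_def)
  obtain ai where ai: "ai < length D" "i \<in> D ! ai" using blk_ex[OF assms(2) i(1)] by blast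
  obtain ap where ap: "ap < length D" "p \<in> D ! ap" using blk_ex[OF assms(2) lt(1)] by blast
  obtain aq where aq: "aq < length D" "q \<in> D ! aq" using blk_ex[OF assms(2) lt(2)] by blast
  obtain ar where ar: "ar < length D" "r \<in> D ! ar" using blk_ex[OF assms(2) lt(3)] by blast
  obtain as where as: "as < length D" "s \<in> D ! as" using blk_ex[OF assms(2) lt(4)] by blast
  obtain bi where bi: "bi < length D'" "i \<in> D' ! bi" using blk_ex[OF assms(3) i(1)] by blast
  obtain bp where bp: "bp < length D'" "p \<in> D' ! bp" using blk_ex[OF assms(3) lt(1)] by blast
  obtain bq where bq: "bq < length D'" "q \<in> D' ! bq" using blk_ex[OF assms(3) lt(2)] by blast
  obtain br where br: "br < length D'" "r \<in> D' ! br" using blk_ex[OF assms(3) lt(3)] by blast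
  obtain bs where bs: "bs < length D'" "s \<in> D' ! bs" using blk_ex[OF assms(3) lt(4)] by blast
  have bD: "blk D i = ai" "blk D p = ap" "blk D s = as"
    using blk_eq[OF assms(2)] ai ap as by auto
  have bD': "blk D' i = bi" "blk D' p = bp" "blk D' s = bs"
    using blk_eq[OF assms(3)] bi bp bs by auto
  have h5: "lab D i p = lab D' i p" using assms(5) i(1) ix(1) by metis
  have c1: "ai \<le> as" "bi \<le> bs" using i(2,3) ix bD bD' by (auto simp: lab_def)
  have c2: "(ai \<le> ap) \<noteq> (bi \<le> bp)" using i(4) ix bD bD' by (auto simp: lab_def)
  have c3: "(ap \<le> ai) = (bp \<le> bi)" using h5 bD bD' by (auto simp: lab_def)
  have c4: "ap \<le> ai" "bp \<le> bi" using c2 c3 by auto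
  have kD: "sched_map n D x i = (ap < ai)"
    by (rule key[OF assms(2) ai ap aq ar as ix xv c1(1) c4(1)])
  have kD': "sched_map n D' x i = (bp < bi)"
    by (rule key[OF assms(3) bi bp bq br bs ix xv c1(2) c4(2)])
  have "sched_map n D x i \<noteq> sched_map n D' x i" using kD kD' c2 c4 by auto
  then show ?thesis unfolding maps_differ_def using xz i(1) by blast
qed

end
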